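(* Let $q\in\,]0,1[$, $\omega\ge 0$, let $I$ be an interval containing $\omega_0:=\omega/(1-q)$, let $c\in I$, and let $f:I\to\mathbb{R}$ be Hahn symmetric integrable on $I$. Suppose $f(t)\ge 0$ for all $t\in\{\sigma^{2n+1}(c):n\in\mathbb{N}_0\}\cup\{\omega_0\}$. 1. If $c\ge\omega_0$, then $\int_{\omega_0}^c f(t)\,\tilde d_{q,\omega}t\ge 0$. 2. If $c<\omega_0$, then $\int_c^{\omega_0}f(t)\,\tilde d_{q,\omega}t\ge 0$.
   Context: $\sigma(t):=qt+\omega$, $\sigma^{-1}(t):=q^{-1}(t-\omega)$, $\sigma^k$ is the $k$-fold composition of $\sigma$. Hahn symmetric integral: for $x\in I$, $\int_{\omega_0}^x f(t)\,\tilde d_{q,\omega}t:=(\sigma^{-1}(x)-\sigma(x))\sum_{n=0}^\infty q^{2n+1}f(\sigma^{2n+1}(x))$, and for $a,b\in I$, $\int_a^b f\,\tilde d_{q,\omega}t:=\int_{\omega_0}^b f\,\tilde d_{q,\omega}t-\int_{\omega_0}^a f\,\tilde d_{q,\omega}t$, provided the series converge. $f$ is Hahn symmetric integrable on $I$ if these series converge for every point of $I$. *)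

theory Defs
  imports "HOL-Analysis.Analysis"
begin

definition hsigma :: "real \<Rightarrow> real \<Rightarrow> real \<Rightarrow> real" where
  "hsigma q \<omega> t = q * t + \<omega>"

definition hsigma_inv :: "real \<Rightarrow> real \<Rightarrow> real \<Rightarrow> real" where
  "hsigma_inv q \<omega> t = (t - \<omega>) / q"

definition omega0 :: "real \<Rightarrow> real \<Rightarrow> real" where
  "omega0 q \<omega> = \<omega> / (1 - q)"

definition hahn_sym_term :: "real \<Rightarrow> real \<Rightarrow> (real \<Rightarrow> real) \<Rightarrow> real \<Rightarrow> nat \<Rightarrow> real" where
  "hahn_sym_term q \<omega> f x n = q ^ (2*n+1) * f ((hsigma q \<omega> ^^ (2*n+1)) x)"

text \<open>Hahn symmetric integral from omega0 to x (meaningful when the series converges).\<close>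
definition hahn_sym_int0 :: "real \<Rightarrow> real \<Rightarrow> (real \<Rightarrow> real) \<Rightarrow> real \<Rightarrow> real" where
  "hahn_sym_int0 q \<omega> f x =
     (hsigma_inv q \<omega> x - hsigma q \<omega> x) * (\<Sum>n. hahn_sym_term q \<omega> f x n)"

definition hahn_sym_int :: "real \<Rightarrow> real \<Rightarrow> (real \<Rightarrow> real) \<Rightarrow> real \<Rightarrow> real \<Rightarrow> real" where
  "hahn_sym_int q \<omega> f a b = hahn_sym_int0 q \<omega> f b - hahn_sym_int0 q \<omega> f a"

definition hahn_sym_integrable_on :: "real \<Rightarrow> real \<Rightarrow> (real \<Rightarrow> real) \<Rightarrow> real set \<Rightarrow> bool" where
  "hahn_sym_integrable_on q \<omega> f I \<longleftrightarrow> (\<forall>x\<in>I. summable (hahn_sym_term q \<omega> f x))"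

end

theory Submission
  imports Defs
begin

lemma diff_formula:
  assumes "0 < q" "q < 1"
  shows "hsigma_inv q \<omega> x - hsigma q \<omega> x = (x - omega0 q \<omega>) * (1/q - q)"
  using assms unfolding hsigma_inv_def hsigma_def omega0_def
  by (simp add: field_simps)

theorem corollary2p18:
  fixes q \<omega> c :: real and I :: "real set" and f :: "real \<Rightarrow> real"
  assumes "0 < q" "q < 1" "0 \<le> \<omega>"
    and "is_interval I" "omega0 q \<omega> \<in> I" "c \<in> I"
    and "hahn_sym_integrable_on q \<omega> f I"
    and "\<forall>t \<in> {(hsigma q \<omega> ^^ (2*n+1)) c | n. True} \<union> {omega0 q \<omega>}. f t \<ge> 0"
  shows "(c \<ge> omega0 q \<omega> \<longrightarrow> hahn_sym_int q \<omega> f (omega0 q \<omega>) c \<ge> 0)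
       \<and> (c < omega0 q \<omega> \<longrightarrow> hahn_sym_int q \<omega> f c (omega0 q \<omega>) \<ge> 0)"
proof -
  have z: "hahn_sym_int0 q \<omega> f (omega0 q \<omega>) = 0"
    unfolding hahn_sym_int0_def using diff_formula[OF assms(1,2)] by simp
  have S: "(\<Sum>n. hahn_sym_term q \<omega> f c n) \<ge> 0"
  proof (rule suminf_nonneg)
    show "summable (hahn_sym_term q \<omega> f c)" using assms(6,7) unfolding hahn_sym_integrable_on_def by blast
    fix n show "0 \<le> hahn_sym_term q \<omega> f c n"
    proof -
      have "f ((hsigma q \<omega> ^^ (2*n+1)) c) \<ge> 0" using assms(8) by blast
      then show ?thesis unfolding hahn_sym_term_def using assms(1) by simp
    qed
  qed
  have Q: "1/q - q > 0" using assms(1,2)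
    by (smt (verit) divide_less_eq_1_pos)
  have I0: "hahn_sym_int0 q \<omega> f c = (c - omega0 q \<omega>) * (1/q - q) * (\<Sum>n. hahn_sym_term q \<omega> f c n)"
    unfolding hahn_sym_int0_def diff_formula[OF assms(1,2)] ..
  show ?thesis
  proof (intro conjI impI)
    assume "c \<ge> omega0 q \<omega>"
    then show "hahn_sym_int q \<omega> f (omega0 q \<omega>) c \<ge> 0"
      unfolding hahn_sym_int_def z I0 using S Q by simp
  next
    assume "c < omega0 q \<omega>"
    then have "(c - omega0 q \<omega>) * (1/q - q) * (\<Sum>n. hahn_sym_term q \<omega> f c n) \<le> 0"
      using S Q by (intro mult_nonpos_nonneg mult_nonpos_nonneg) auto
    then show "hahn_sym_int q \<omega> f c (omega0 q \<omega>) \<ge> 0"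
      unfolding hahn_sym_int_def z I0 by simp
  qed
qed

end
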